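(* Let $A$ be a principal ideal domain and let $a=(a_b)_{b\neq0}\in A^\omega$. Let $d$ be a nonzero element of $A$ such that $a_d\equiv0\bmod d$. Then there is $q\in A^\omega$ with $a=d\,q$.
   Context: For a principal ideal domain $A$, $A^\omega$ is the ring whose elements are represented by families $(a_d)_{d\in A\setminus\{0\}}$ of elements of $A$ such that $d\mid e\Rightarrow a_d\equiv a_e\bmod d$ for all nonzero $d,e$; two families $(a_d)$, $(b_d)$ represent the same element iff $a_d\equiv b_d\bmod d$ for all $d\ne0$; operations are componentwise. $A$ is embedded in $A^\omega$ via constant families. *)

theory Defs
  imports Main
begin

definition is_ideal :: "'a::comm_ring_1 set \<Rightarrow> bool" where
  "is_ideal I \<longleftrightarrow> 0 \<in> I \<and> (\<forall>x\<in>I. \<forall>y\<in>I. x + y \<in> I) \<and> (\<forall>r. \<forall>x\<in>I. r * x \<in> I)"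

definition is_pid :: "'a::idom itself \<Rightarrow> bool" where
  "is_pid _ \<longleftrightarrow> (\<forall>I::'a set. is_ideal I \<longrightarrow> (\<exists>g. I = {g * x | x. True}))"

text \<open>Representatives of elements of A^omega: families indexed by nonzero elements
  (values at 0 are irrelevant) satisfying the compatibility condition.\<close>
definition omega_family :: "('a::idom \<Rightarrow> 'a) \<Rightarrow> bool" where
  "omega_family a \<longleftrightarrow> (\<forall>d e. d \<noteq> 0 \<longrightarrow> e \<noteq> 0 \<longrightarrow> d dvd e \<longrightarrow> d dvd (a d - a e))"

text \<open>Two families represent the same element of A^omega.\<close>
definition omega_eq :: "('a::idom \<Rightarrow> 'a) \<Rightarrow> ('a \<Rightarrow> 'a) \<Rightarrow> bool" where
  "omega_eq a b \<longleftrightarrow> (\<forall>d. d \<noteq> 0 \<longrightarrow> d dvd (a d - b d))"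

end

theory Submission
  imports Defs
begin

theorem mainTheorem9:
  fixes a :: "'a::idom \<Rightarrow> 'a" and d :: "'a"
  assumes "is_pid TYPE('a)"
    and "omega_family a"
    and "d \<noteq> 0"
    and "d dvd a d"
  shows "\<exists>q. omega_family q \<and> omega_eq a (\<lambda>b. d * q b)"
proof -
  have fam: "\<And>x y. x \<noteq> 0 \<Longrightarrow> y \<noteq> 0 \<Longrightarrow> x dvd y \<Longrightarrow> x dvd (a x - a y)"
    using assms(2) unfolding omega_family_def by blast
  have dv: "d dvd a (b * d)" if "b \<noteq> 0" for b
  proof -
    have "d dvd (a d - a (b * d))" using fam[of d "b*d"] that assms(3) by simp
    then have "d dvd a d - (a d - a (b * d))" by (rule dvd_diff[OF assms(4)])
    then show ?thesis by simp
  qed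
  define q where "q b = (SOME r. a (b * d) = d * r)" for b
  have qd: "a (b * d) = d * q b" if bnz: "b \<noteq> 0" for b
  proof -
    obtain r where "a (b * d) = d * r" using dv[OF bnz] by (auto elim: dvdE)
    then show ?thesis unfolding q_def by (rule someI)
  qed
  have "omega_family q"
    unfolding omega_family_def
  proof (intro allI impI)
    fix b e :: 'a assume b: "b \<noteq> 0" and e: "e \<noteq> 0" and be: "b dvd e"
    have "b * d dvd e * d" using be by simp
    then have "b * d dvd (a (b*d) - a (e*d))" using fam[of "b*d" "e*d"] b e assms(3) by simp
    then have "d * b dvd d * (q b - q e)" using qd[OF b] qd[OF e]
      by (simp add: right_diff_distrib mult.commute)
    then show "b dvd (q b - q e)" using assms(3) by simp
  qed
  moreover have "omega_eq a (\<lambda>b. d * q b)"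
    unfolding omega_eq_def
  proof (intro allI impI)
    fix b :: 'a assume b: "b \<noteq> 0"
    have "b dvd b * d" by simp
    then show "b dvd (a b - d * q b)" using fam[of b "b*d"] b assms(3) qd[OF b] by simp
  qed
  ultimately show ?thesis by blast
qed

end
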